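(* Let $\mathbb{M}^2$ be a strictly convex normed plane, let $p,q\in\mathbb{M}^2$ be distinct points, and let $y$ be a point of the bisector $\mathrm{bis}(p,q)=\{z:\|z-p\|=\|z-q\|\}$. Then for every $\epsilon>0$, $\|y+\epsilon(y-p)-q\|<\|y+\epsilon(y-p)-p\|$.
   Context: $\mathbb{M}^2$ is $\mathbb{R}^2$ with a norm $\|\cdot\|$; it is strictly convex if its unit sphere contains no nondegenerate line segment. The paper phrases the hypothesis as $y\in Bi(p,q)$, where $Bi(p,q)\subseteq\mathrm{bis}(p,q)$ is a simple curve that can be chosen to pass through any given point of $\mathrm{bis}(p,q)$; hence the condition is that $y$ is a point of the bisector. *)

theory Defs
  imports "HOL-Analysis.Analysis"
begin

definition is_norm :: "(real^2 \<Rightarrow> real) \<Rightarrow> bool" where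
  "is_norm N \<longleftrightarrow>
     (\<forall>x. 0 \<le> N x) \<and> (\<forall>x. N x = 0 \<longleftrightarrow> x = 0) \<and>
     (\<forall>c x. N (c *\<^sub>R x) = \<bar>c\<bar> * N x) \<and>
     (\<forall>x y. N (x + y) \<le> N x + N y)"

definition strictly_convex_norm :: "(real^2 \<Rightarrow> real) \<Rightarrow> bool" where
  "strictly_convex_norm N \<longleftrightarrow>
     \<not> (\<exists>a b. a \<noteq> b \<and> (\<forall>z\<in>closed_segment a b. N z = 1))"

definition bisector :: "(real^2 \<Rightarrow> real) \<Rightarrow> real^2 \<Rightarrow> real^2 \<Rightarrow> (real^2) set" where
  "bisector N p q = {z. N (z - p) = N (z - q)}"

end

theory Submission
  imports Defs
begin

lemma norm_props:
  assumes "is_norm N"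
  shows "N (x + y) \<le> N x + N y" "N (c *\<^sub>R x) = \<bar>c\<bar> * N x" "0 \<le> N x"
    "N x = 0 \<longleftrightarrow> x = 0"
  using assms unfolding is_norm_def by auto

lemma convex_comb_le:
  assumes "is_norm N" "0 \<le> l" "l \<le> 1"
  shows "N (l *\<^sub>R a + (1 - l) *\<^sub>R b) \<le> l * N a + (1 - l) * N b"
proof -
  have "N (l *\<^sub>R a + (1 - l) *\<^sub>R b) \<le> N (l *\<^sub>R a) + N ((1 - l) *\<^sub>R b)"
    using norm_props(1)[OF assms(1)] by blast
  also have "\<dots> = l * N a + (1 - l) * N b"
    using norm_props(2)[OF assms(1)] assms by simp
  finally show ?thesis .
qed

lemma comb_id:
  "l *\<^sub>R ((1 - t) *\<^sub>R u + t *\<^sub>R v) + (1 - l) *\<^sub>R (v::real^2) = (l*(1-t)) *\<^sub>R u + (l*t+(1-l)) *\<^sub>R v"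
  by (simp add: algebra_simps)

lemma comb_id2:
  "l *\<^sub>R ((1 - t) *\<^sub>R u + t *\<^sub>R v) + (1 - l) *\<^sub>R (u::real^2) = (l*(1-t) + (1-l)) *\<^sub>R u + (l*t) *\<^sub>R v"
  by (simp add: algebra_simps)

lemma strict_mid:
  assumes N: "is_norm N" and sc: "strictly_convex_norm N"
    and u: "N u = 1" and v: "N v = 1" and uv: "u \<noteq> v"
    and s: "0 < s" "s < 1"
  shows "N ((1 - s) *\<^sub>R u + s *\<^sub>R v) < 1"
proof (rule ccontr)
  define c where "c = (1 - s) *\<^sub>R u + s *\<^sub>R v"
  have cle: "N c \<le> 1"
    using convex_comb_le[OF N, of "1-s" u v] s u v by (simp add: c_def)
  assume "\<not> N ((1 - s) *\<^sub>R u + s *\<^sub>R v) < 1"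
  then have c1: "N c = 1" using cle c_def by simp
  have seg: "\<forall>z\<in>closed_segment u v. N z = 1"
  proof
    fix z assume "z \<in> closed_segment u v"
    then obtain t where t: "0 \<le> t" "t \<le> 1" and z: "z = (1 - t) *\<^sub>R u + t *\<^sub>R v"
      unfolding closed_segment_def by auto
    have zle: "N z \<le> 1"
      using convex_comb_le[OF N, of "1-t" u v] t u v by (simp add: z)
    have "N z \<ge> 1"
    proof (cases "t \<le> s")
      case True
      define l where "l = (1 - s) / (1 - t)"
      have t1: "1 - t > 0" using True s by simp
      have l: "0 < l" "l \<le> 1" using True s t1 by (auto simp: l_def)
      have "c = l *\<^sub>R z + (1 - l) *\<^sub>R v"
      proof -
        have "l * (1 - t) = 1 - s" using t1 by (simp add: l_def)
        moreover have "l * t + (1 - l) = s" using \<open>l * (1 - t) = 1 - s\<close>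
          by (simp add: algebra_simps)
        ultimately show ?thesis
          unfolding c_def z comb_id by simp
      qed
      then have "1 \<le> l * N z + (1 - l) * N v"
        using convex_comb_le[OF N, of l z v] l c1 by simp
      then show ?thesis using l v by (simp add: algebra_simps)
    next
      case False
      define l where "l = s / t"
      have t1: "t > 0" using False s by simp
      have l: "0 < l" "l \<le> 1" using False s t1 by (auto simp: l_def)
      have "c = l *\<^sub>R z + (1 - l) *\<^sub>R u"
      proof -
        have "l * t = s" using t1 by (simp add: l_def)
        moreover have "l * (1 - t) + (1 - l) = 1 - s" using \<open>l * t = s\<close>
          by (simp add: algebra_simps)
        ultimately show ?thesis
          unfolding c_def z comb_id2 by simp
      qed
      then have "1 \<le> l * N z + (1 - l) * N u"
        using convex_comb_le[OF N, of l z u] l c1 by simp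
      then show ?thesis using l u by (simp add: algebra_simps)
    qed
    then show "N z = 1" using zle by simp
  qed
  have "\<exists>a b. a \<noteq> b \<and> (\<forall>z\<in>closed_segment a b. N z = 1)"
    using uv seg by metis
  with sc[unfolded strictly_convex_norm_def] show False by (rule notE)
qed

theorem lemma6p1:
  fixes N :: "real^2 \<Rightarrow> real" and p q y :: "real^2" and \<epsilon> :: real
  assumes "is_norm N" and "strictly_convex_norm N"
    and "p \<noteq> q" and "y \<in> bisector N p q" and "\<epsilon> > 0"
  shows "N (y + \<epsilon> *\<^sub>R (y - p) - q) < N (y + \<epsilon> *\<^sub>R (y - p) - p)"
proof -
  note N = assms(1)
  define r where "r = N (y - p)"
  have rq: "N (y - q) = r" using assms(4) by (simp add: bisector_def r_def)
  have r0: "r > 0"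
  proof -
    have "r \<ge> 0" unfolding r_def by (rule norm_props(3)[OF N])
    moreover have "r \<noteq> 0"
    proof
      assume "r = 0"
      then have "N (y - p) = 0" "N (y - q) = 0" using rq unfolding r_def by auto
      then have "y - p = 0" "y - q = 0" using norm_props(4)[OF N] by blast+
      then show False using assms(3) by simp
    qed
    ultimately show ?thesis by simp
  qed
  define a where "a = (1/r) *\<^sub>R (y - q)"
  define b where "b = (1/r) *\<^sub>R (y - p)"
  have "N a = \<bar>1/r\<bar> * N (y - q)" unfolding a_def by (rule norm_props(2)[OF N])
  then have na: "N a = 1" using r0 rq by simp
  have "N b = \<bar>1/r\<bar> * N (y - p)" unfolding b_def by (rule norm_props(2)[OF N])
  then have nb: "N b = 1" using r0 by (simp add: r_def[symmetric])
  have ab: "a \<noteq> b"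
  proof
    assume "a = b"
    then have "(1/r) *\<^sub>R (y - q) = (1/r) *\<^sub>R (y - p)" by (simp add: a_def b_def)
    then have "y - q = y - p" using r0 by simp
    then show False using assms(3) by simp
  qed
  define s where "s = \<epsilon> / (1 + \<epsilon>)"
  have s: "0 < s" "s < 1" using assms(5) by (auto simp: s_def)
  have lt: "N ((1 - s) *\<^sub>R a + s *\<^sub>R b) < 1"
    using strict_mid[OF N assms(2) na nb ab s] .
  have eq1: "y + \<epsilon> *\<^sub>R (y - p) - q = (r * (1 + \<epsilon>)) *\<^sub>R ((1 - s) *\<^sub>R a + s *\<^sub>R b)"
  proof -
    have pos: "r + \<epsilon> * r > 0" using r0 assms(5) by (simp add: add_pos_pos)
    have h1: "r * (1 + \<epsilon>) * (1 - s) * (1/r) = 1" using r0 assms(5) pos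
      by (simp add: s_def field_simps)
    have h2: "r * (1 + \<epsilon>) * s * (1/r) = \<epsilon>" using r0 assms(5) pos
      by (simp add: s_def field_simps)
    have "(r * (1 + \<epsilon>)) *\<^sub>R ((1 - s) *\<^sub>R a + s *\<^sub>R b)
        = (r * (1 + \<epsilon>) * (1 - s) * (1/r)) *\<^sub>R (y - q) + (r * (1 + \<epsilon>) * s * (1/r)) *\<^sub>R (y - p)"
      unfolding a_def b_def by (simp only: scaleR_add_right scaleR_scaleR mult.assoc)
    also have "\<dots> = (y - q) + \<epsilon> *\<^sub>R (y - p)" by (simp only: h1 h2 scaleR_one)
    finally show ?thesis by (simp add: algebra_simps)
  qed
  have eq2: "y + \<epsilon> *\<^sub>R (y - p) - p = (1 + \<epsilon>) *\<^sub>R (y - p)"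
    by (simp add: algebra_simps)
  have e3: "N (y + \<epsilon> *\<^sub>R (y - p) - q) = \<bar>r * (1 + \<epsilon>)\<bar> * N ((1 - s) *\<^sub>R a + s *\<^sub>R b)"
    unfolding eq1 by (rule norm_props(2)[OF N])
  have e4: "\<bar>r * (1 + \<epsilon>)\<bar> = r * (1 + \<epsilon>)" using r0 assms(5) by simp
  have "N (y + \<epsilon> *\<^sub>R (y - p) - q) = r * (1 + \<epsilon>) * N ((1 - s) *\<^sub>R a + s *\<^sub>R b)"
    using e3 e4 by simp
  also have "\<dots> < r * (1 + \<epsilon>)" using lt r0 assms(5) by simp
  also have "\<dots> = \<bar>1 + \<epsilon>\<bar> * N (y - p)" using assms(5) by (simp add: r_def)
  also have "\<dots> = N (y + \<epsilon> *\<^sub>R (y - p) - p)"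
    unfolding eq2 by (rule norm_props(2)[OF N, symmetric])
  finally show ?thesis .
qed

end
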